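(* Let $\Gamma=(V,E,w)$ be a finite simple weighted digraph with vertex set $V=\{1,\dots,n\}$ and weights $0\le w_{ij}\le 1$ (with $w_{ij}=0$ iff $(i,j)\notin E$), and let $L=D-A$ be its graph Laplacian. Then $\Gamma$ is a complete dominance graph if and only if there exists a permutation matrix $P$ such that, for each $i=1,\dots,n$, $P\mathbf{v}_i$ is an eigenvector of $L$ for the eigenvalue $n-i$, where $\mathbf{v}_i=\sum_{k=1}^{i}\mathbf{e}_k$ and $\mathbf{e}_k$ is the $k$th standard basis vector of $\mathbb{R}^n$.
   Context: $d^{+}(i)=\sum_{j\in V} w_{ij}$, $D=\mathrm{diag}(d^{+}(1),\dots,d^{+}(n))$, $A=[w_{ij}]$, $L=D-A$. A tournament is a digraph such that for each pair of distinct vertices exactly one of $(i,j),(j,i)$ is an edge. A complete dominance graph is an acyclic tournament in which every edge has weight $1$. *)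

theory Defs
  imports "Jordan_Normal_Form.Char_Poly"
begin

text \<open>Vertices are 0,...,n-1 (0-based version of 1,...,n). A weighted digraph
  on n vertices is given by its weight function w; the edge set consists of
  the pairs with nonzero weight.\<close>

definition edges :: "nat \<Rightarrow> (nat \<Rightarrow> nat \<Rightarrow> real) \<Rightarrow> (nat \<times> nat) set" where
  "edges n w = {(i, j). i < n \<and> j < n \<and> w i j \<noteq> 0}"

definition out_degree :: "nat \<Rightarrow> (nat \<Rightarrow> nat \<Rightarrow> real) \<Rightarrow> nat \<Rightarrow> real" where
  "out_degree n w i = (\<Sum>j<n. w i j)"

definition adjacency_mat :: "nat \<Rightarrow> (nat \<Rightarrow> nat \<Rightarrow> real) \<Rightarrow> real mat" where
  "adjacency_mat n w = mat n n (\<lambda>(i, j). w i j)"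

definition degree_mat :: "nat \<Rightarrow> (nat \<Rightarrow> nat \<Rightarrow> real) \<Rightarrow> real mat" where
  "degree_mat n w = mat n n (\<lambda>(i, j). if i = j then out_degree n w i else 0)"

definition laplacian :: "nat \<Rightarrow> (nat \<Rightarrow> nat \<Rightarrow> real) \<Rightarrow> real mat" where
  "laplacian n w = degree_mat n w - adjacency_mat n w"

definition tournament :: "nat \<Rightarrow> (nat \<Rightarrow> nat \<Rightarrow> real) \<Rightarrow> bool" where
  "tournament n w = (\<forall>i<n. \<forall>j<n. i \<noteq> j \<longrightarrow>
      ((i, j) \<in> edges n w \<longleftrightarrow> (j, i) \<notin> edges n w))"

definition complete_dominance_graph :: "nat \<Rightarrow> (nat \<Rightarrow> nat \<Rightarrow> real) \<Rightarrow> bool" where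
  "complete_dominance_graph n w =
     (tournament n w \<and> acyclic (edges n w) \<and> (\<forall>(i, j) \<in> edges n w. w i j = 1))"

definition permutation_mat :: "nat \<Rightarrow> real mat \<Rightarrow> bool" where
  "permutation_mat n P = (P \<in> carrier_mat n n \<and>
     (\<forall>i<n. \<forall>j<n. P $$ (i, j) = 0 \<or> P $$ (i, j) = 1) \<and>
     (\<forall>i<n. \<exists>!j. j < n \<and> P $$ (i, j) = 1) \<and>
     (\<forall>j<n. \<exists>!i. i < n \<and> P $$ (i, j) = 1))"

text \<open>v_i = e_1 + ... + e_i (in 0-based coordinates: ones at positions 0..i-1).\<close>
definition ones_prefix :: "nat \<Rightarrow> nat \<Rightarrow> real vec" where
  "ones_prefix n i = vec n (\<lambda>k. if k < i then 1 else 0)"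

end

theory Submission
  imports Defs
begin

definition ind :: "nat \<Rightarrow> (nat \<Rightarrow> bool) \<Rightarrow> real vec" where
  "ind n S = vec n (\<lambda>k. if S k then 1 else 0)"

lemma lap_dim: "laplacian n w \<in> carrier_mat n n"
  unfolding laplacian_def degree_mat_def adjacency_mat_def by (intro minus_carrier_mat) auto

lemma evA:
  assumes weights: "\<And>i j. i < n \<Longrightarrow> j < n \<Longrightarrow> 0 \<le> w i j \<and> w i j \<le> 1"
    and lap: "\<And>a. a < n \<Longrightarrow> (laplacian n w *\<^sub>v ind n S) $ a =
    (if S a then (\<Sum>b\<in>{b. b<n \<and> \<not> S b}. w a b) else - (\<Sum>b\<in>{b. b<n \<and> S b}. w a b))"
    and ev: "eigenvector (laplacian n w) (ind n S) (real n - real i)"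
    and card: "card {b. b<n \<and> S b} = i"
    and ab: "a < n" "b < n" "S a" "\<not> S b"
  shows "w a b = 1 \<and> w b a = 0"
proof -
  have eq: "laplacian n w *\<^sub>v ind n S = (real n - real i) \<cdot>\<^sub>v ind n S"
    using ev unfolding eigenvector_def by auto
  have ca: "card {b. b<n \<and> \<not> S b} = n - i"
  proof -
    have "{b. b<n \<and> \<not> S b} = {..<n} - {b. b<n \<and> S b}" by auto
    then show ?thesis using card card_Diff_subset[of "{b. b<n \<and> S b}" "{..<n}"] by auto
  qed
  have "i \<le> n" using card card_mono[of "{..<n}" "{b. b<n \<and> S b}"] by auto
  have "(\<Sum>c\<in>{b. b<n \<and> \<not> S b}. w a c) = real n - real i"
    using arg_cong[OF eq, of "\<lambda>v. v $ a"] lap[OF ab(1)] ab by (simp add: ind_def)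
  then have "(\<Sum>c\<in>{b. b<n \<and> \<not> S b}. 1 - w a c) = 0"
    using ca \<open>i \<le> n\<close> by (simp add: sum_subtractf of_nat_diff)
  then have "\<forall>c\<in>{b. b<n \<and> \<not> S b}. 1 - w a c = 0"
    by (subst sum_nonneg_eq_0_iff[symmetric]) (use weights ab in auto)
  then have 1: "w a b = 1" using ab by auto
  have "- (\<Sum>c\<in>{b. b<n \<and> S b}. w b c) = 0"
    using arg_cong[OF eq, of "\<lambda>v. v $ b"] lap[OF ab(2)] ab by (simp add: ind_def)
  then have "(\<Sum>c\<in>{b. b<n \<and> S b}. w b c) = 0" by simp
  then have "\<forall>c\<in>{b. b<n \<and> S b}. w b c = 0"
    by (subst sum_nonneg_eq_0_iff[symmetric]) (use weights ab in auto)
  then have "w b a = 0" using ab by auto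
  with 1 show ?thesis by simp
qed

lemma evB:
  assumes lap: "\<And>a. a < n \<Longrightarrow> (laplacian n w *\<^sub>v ind n S) $ a =
    (if S a then (\<Sum>b\<in>{b. b<n \<and> \<not> S b}. w a b) else - (\<Sum>b\<in>{b. b<n \<and> S b}. w a b))"
    and card: "card {b. b<n \<and> S b} = i" and i: "1 \<le> i"
    and W: "\<And>a b. a < n \<Longrightarrow> b < n \<Longrightarrow> S a \<Longrightarrow> \<not> S b \<Longrightarrow> w a b = 1 \<and> w b a = 0"
  shows "eigenvector (laplacian n w) (ind n S) (real n - real i)"
proof -
  have ca: "card {b. b<n \<and> \<not> S b} = n - i"
  proof -
    have "{b. b<n \<and> \<not> S b} = {..<n} - {b. b<n \<and> S b}" by auto
    then show ?thesis using card card_Diff_subset[of "{b. b<n \<and> S b}" "{..<n}"] by auto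
  qed
  have "i \<le> n" using card card_mono[of "{..<n}" "{b. b<n \<and> S b}"] by auto
  obtain a0 where a0: "a0 < n" "S a0" using card i by (metis (mono_tags, lifting) card.empty empty_Collect_eq not_one_le_zero)
  have ne: "ind n S \<noteq> 0\<^sub>v n"
  proof
    assume "ind n S = 0\<^sub>v n"
    then have "ind n S $ a0 = 0\<^sub>v n $ a0" by simp
    then show False using a0 by (simp add: ind_def)
  qed
  have "laplacian n w *\<^sub>v ind n S = (real n - real i) \<cdot>\<^sub>v ind n S"
  proof (rule eq_vecI)
    fix a assume a: "a < dim_vec ((real n - real i) \<cdot>\<^sub>v ind n S)"
    then have a': "a < n" by (simp add: ind_def)
    show "(laplacian n w *\<^sub>v ind n S) $ a = ((real n - real i) \<cdot>\<^sub>v ind n S) $ a"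
    proof (cases "S a")
      case True
      have "(\<Sum>b\<in>{b. b<n \<and> \<not> S b}. w a b) = (\<Sum>b\<in>{b. b<n \<and> \<not> S b}. 1)"
        using W[OF a'] True by (intro sum.cong) auto
      then show ?thesis using lap[OF a'] True a' ca \<open>i \<le> n\<close> by (simp add: ind_def of_nat_diff)
    next
      case False
      have "(\<Sum>b\<in>{b. b<n \<and> S b}. w a b) = 0"
        using W[OF _ a'] False by (intro sum.neutral) auto
      then show ?thesis using lap[OF a'] False a' by (simp add: ind_def)
    qed
  qed (use lap_dim[of n w] in \<open>simp add: ind_def\<close>)
  then show ?thesis unfolding eigenvector_def using ne lap_dim[of n w]
    by (simp add: ind_def)
qed

definition Rg :: "nat \<Rightarrow> (nat \<Rightarrow> nat \<Rightarrow> real) \<Rightarrow> (nat \<Rightarrow> nat) \<Rightarrow> bool" where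
  "Rg n w g = (inj_on g {..<n} \<and> (\<forall>a<n. g a < n) \<and> (\<forall>a<n. \<forall>b<n. w a b = (if g a < g b then 1 else 0)))"

lemma Rg_cdg:
  assumes "Rg n w g" shows "complete_dominance_graph n w"
proof -
  have E: "edges n w = {(a,b). a<n \<and> b<n \<and> g a < g b}"
  proof -
    have W: "\<forall>a<n. \<forall>b<n. w a b = (if g a < g b then 1 else 0)" using assms unfolding Rg_def by blast
    have "w a b \<noteq> 0 \<longleftrightarrow> g a < g b" if "a<n" "b<n" for a b
      using W that by (cases "g a < g b") auto
    note * = this
    show ?thesis
    proof (rule Set.set_eqI)
      fix p :: "nat \<times> nat"
      obtain a b where p: "p = (a,b)" by fastforce
      show "p \<in> edges n w \<longleftrightarrow> p \<in> {(a,b). a<n \<and> b<n \<and> g a < g b}"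
        unfolding p edges_def using *[of a b] by blast
    qed
  qed
  have tour: "tournament n w"
  proof -
    have inj: "inj_on g {..<n}" using assms unfolding Rg_def by blast
    have "g a \<noteq> g b" if "a<n" "b<n" "a \<noteq> b" for a b
      using inj that unfolding inj_on_def by blast
    then show ?thesis unfolding tournament_def E by force
  qed
  let ?R = "{(a,b). g a < g b}"
  have "trans ?R" by (auto simp: trans_def)
  then have "acyclic ?R" unfolding acyclic_def by (simp add: trancl_id)
  then have "acyclic (edges n w)" by (rule acyclic_subset) (auto simp: E)
  moreover have "\<forall>(i, j) \<in> edges n w. w i j = 1"
  proof (intro ballI)
    have W: "\<forall>a<n. \<forall>b<n. w a b = (if g a < g b then 1 else 0)" using assms unfolding Rg_def by blast
    fix p assume "p \<in> edges n w"
    then obtain a b where p: "p = (a,b)" "a < n" "b < n" "g a < g b" unfolding E by blast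
    then have "w a b = 1" using W by simp
    then show "case p of (i, j) \<Rightarrow> w i j = 1" using p by simp
  qed
  ultimately show ?thesis using tour unfolding complete_dominance_graph_def by blast
qed

lemma cdg_Rg:
  assumes no_loops: "\<And>i. i < n \<Longrightarrow> w i i = 0"
    and cdg: "complete_dominance_graph n w"
  shows "\<exists>g. Rg n w g"
proof -
  let ?E = "edges n w"
  have tour: "\<And>a b. a<n \<Longrightarrow> b<n \<Longrightarrow> a \<noteq> b \<Longrightarrow> (a,b) \<in> ?E \<longleftrightarrow> (b,a) \<notin> ?E"
    using cdg unfolding complete_dominance_graph_def tournament_def by blast
  have acyc: "acyclic ?E" using cdg unfolding complete_dominance_graph_def by blast
  have one: "\<And>a b. (a,b) \<in> ?E \<Longrightarrow> w a b = 1" using cdg unfolding complete_dominance_graph_def by blast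
  have Ein: "\<And>a b. (a,b) \<in> ?E \<Longrightarrow> a < n \<and> b < n \<and> a \<noteq> b"
    using no_loops unfolding edges_def by auto
  have tr: "(a,c) \<in> ?E" if ab: "(a,b) \<in> ?E" and bc: "(b,c) \<in> ?E" for a b c
  proof (rule ccontr)
    assume nac: "(a,c) \<notin> ?E"
    have "a \<noteq> c"
    proof
      assume "a = c"
      then have "(a,a) \<in> ?E\<^sup>+" using ab bc by auto
      then show False using acyc unfolding acyclic_def by blast
    qed
    then have "(c,a) \<in> ?E" using tour[of a c] nac Ein[OF ab] Ein[OF bc] by auto
    then have "(a,a) \<in> ?E\<^sup>+" using ab bc
      by (meson trancl.r_into_trancl trancl_into_trancl)
    then show False using acyc unfolding acyclic_def by blast
  qed
  define g where "g a = card {b. (b,a) \<in> ?E}" for a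
  have fin: "finite {b. (b,a) \<in> ?E}" for a
    by (rule finite_subset[of _ "{..<n}"]) (auto dest: Ein)
  have mono: "g a < g b" if ab: "(a,b) \<in> ?E" for a b
  proof -
    have "{c. (c,a) \<in> ?E} \<subset> {c. (c,b) \<in> ?E}"
    proof
      show "{c. (c,a) \<in> ?E} \<subseteq> {c. (c,b) \<in> ?E}" using tr ab by blast
      have "(a,a) \<notin> ?E" using Ein by blast
      then show "{c. (c,a) \<in> ?E} \<noteq> {c. (c,b) \<in> ?E}" using ab by blast
    qed
    then show ?thesis unfolding g_def by (rule psubset_card_mono[OF fin])
  qed
  have "inj_on g {..<n}"
  proof (rule inj_onI)
    fix a b assume "a \<in> {..<n}" "b \<in> {..<n}" "g a = g b"
    then show "a = b" using tour[of a b] mono[of a b] mono[of b a] by fastforce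
  qed
  moreover have "g a < n" if "a < n" for a
  proof -
    have "{b. (b,a) \<in> ?E} \<subseteq> {..<n} - {a}" by (auto dest: Ein)
    then have "g a \<le> card ({..<n} - {a})" unfolding g_def by (intro card_mono) auto
    then show ?thesis using that by simp
  qed
  moreover have "w a b = (if g a < g b then 1 else 0)" if "a<n" "b<n" for a b
  proof (cases "(a,b) \<in> ?E")
    case True then show ?thesis using one mono by auto
  next
    case False
    then have "w a b = 0" using that unfolding edges_def by auto
    moreover have "\<not> g a < g b"
    proof (cases "a = b")
      case False
      then have "(b,a) \<in> ?E" using tour[of a b] that \<open>(a,b) \<notin> ?E\<close> by auto
      then show ?thesis using mono by fastforce
    qed simp
    ultimately show ?thesis by simp
  qed
  ultimately show ?thesis unfolding Rg_def by blast
qed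

lemma card_lev:
  assumes inj: "inj_on g {..<n}" and rng: "\<forall>a<n. g a < n" and i: "i \<le> n"
  shows "card {a. a<n \<and> g a < i} = i"
proof -
  have surj: "g ` {..<n} = {..<n}"
    using inj rng by (intro endo_inj_surj) auto
  have "g ` {a. a<n \<and> g a < i} = {..<i}"
  proof (rule Set.set_eqI)
    fix j show "j \<in> g ` {a. a<n \<and> g a < i} \<longleftrightarrow> j \<in> {..<i}"
    proof
      assume "j \<in> {..<i}"
      then have "j \<in> g ` {..<n}" using surj i by auto
      then obtain a where "a < n" "j = g a" by auto
      then show "j \<in> g ` {a. a<n \<and> g a < i}" using \<open>j \<in> {..<i}\<close> by auto
    qed auto
  qed
  moreover have "inj_on g {a. a<n \<and> g a < i}" using inj by (rule inj_on_subset) auto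
  ultimately show ?thesis using card_image by fastforce
qed

lemma Pv:
  assumes P: "P \<in> carrier_mat n n" and Pe: "\<forall>a<n. \<forall>j<n. P $$ (a,j) = (if g a = j then 1 else 0)"
    and rng: "\<forall>a<n. g a < n"
  shows "P *\<^sub>v ones_prefix n i = ind n (\<lambda>a. g a < i)"
proof (rule eq_vecI)
  fix a assume "a < dim_vec (ind n (\<lambda>a. g a < i))"
  then have a: "a < n" by (simp add: ind_def)
  have "(P *\<^sub>v ones_prefix n i) $ a = (\<Sum>j\<in>{0..<n}. P $$ (a,j) * (if j < i then 1 else 0))"
    using P a by (simp add: ones_prefix_def scalar_prod_def row_def)
  also have "\<dots> = (\<Sum>j\<in>{0..<n}. if j = g a then (if g a < i then 1 else 0) else 0)"
    using Pe a by (intro sum.cong) auto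
  also have "\<dots> = (if g a < i then 1 else 0)" using rng a by simp
  finally show "(P *\<^sub>v ones_prefix n i) $ a = ind n (\<lambda>a. g a < i) $ a"
    using a by (simp add: ind_def)
qed (use P in \<open>simp add: ind_def\<close>)

lemma lap_ind:
  assumes "a < n"
  shows "(laplacian n w *\<^sub>v ind n S) $ a =
    (if S a then (\<Sum>b\<in>{b. b<n \<and> \<not> S b}. w a b) else - (\<Sum>b\<in>{b. b<n \<and> S b}. w a b))"
proof -
  have L: "(laplacian n w *\<^sub>v ind n S) $ a = (\<Sum>b\<in>{0..<n}. ((if a = b then out_degree n w a else 0) - w a b) * (if S b then 1 else 0))"
  proof -
    have "laplacian n w = mat n n (\<lambda>(i, j). (if i = j then out_degree n w i else 0) - w i j)"
      by (rule eq_matI) (auto simp: laplacian_def degree_mat_def adjacency_mat_def)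
    then show ?thesis using assms by (simp add: ind_def scalar_prod_def row_def)
  qed
  have e1: "(\<Sum>b\<in>{0..<n}. ((if a = b then out_degree n w a else 0) - w a b) * (if S b then 1 else 0::real)) = (\<Sum>b<n. (if a = b then out_degree n w a else 0) * (if S b then 1 else 0)) - (\<Sum>b<n. w a b * (if S b then 1 else 0))"
    by (simp add: left_diff_distrib sum_subtractf atLeast0LessThan)
  have e2: "(\<Sum>b<n. (if a = b then out_degree n w a else 0) * (if S b then 1 else 0::real)) = (if S a then out_degree n w a else 0)"
  proof -
    have "(\<Sum>b<n. (if a = b then out_degree n w a else 0) * (if S b then 1 else 0::real)) = (\<Sum>b<n. if a = b then (if S a then out_degree n w a else 0) else 0)"
      by (rule sum.cong) auto
    then show ?thesis using assms by simp
  qed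
  have e3: "(\<Sum>b<n. w a b * (if S b then 1 else 0)) = (\<Sum>b\<in>{b. b<n \<and> S b}. w a b)"
    by (rule sum.mono_neutral_cong_right) auto
  have e4: "out_degree n w a = (\<Sum>b\<in>{b. b<n \<and> S b}. w a b) + (\<Sum>b\<in>{b. b<n \<and> \<not> S b}. w a b)"
  proof -
    have "{..<n} = {b. b<n \<and> S b} \<union> {b. b<n \<and> \<not> S b}" by auto
    then show ?thesis unfolding out_degree_def
      by (simp add: sum.union_disjoint[symmetric] disjoint_iff)
  qed
  have "(laplacian n w *\<^sub>v ind n S) $ a = (if S a then out_degree n w a else 0) - (\<Sum>b\<in>{b. b<n \<and> S b}. w a b)"
    unfolding L e1 e2 e3 by (rule refl)
  then show ?thesis unfolding e4 by (cases "S a") simp_all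
qed

lemma Rg_perm:
  assumes R: "Rg n w g"
  shows "\<exists>P. permutation_mat n P \<and>
       (\<forall>i\<in>{1..n}. eigenvector (laplacian n w) (P *\<^sub>v ones_prefix n i) (real n - real i))"
proof -
  have inj: "inj_on g {..<n}" and rng: "\<forall>a<n. g a < n"
    and W: "\<forall>a<n. \<forall>b<n. w a b = (if g a < g b then 1 else 0)" using R unfolding Rg_def by blast+
  have surj: "g ` {..<n} = {..<n}"
    using inj rng by (intro endo_inj_surj) auto
  define P :: "real mat" where "P = mat n n (\<lambda>(a,j). if g a = j then 1 else 0)"
  have Pc: "P \<in> carrier_mat n n" unfolding P_def by simp
  have Pe: "\<forall>a<n. \<forall>j<n. P $$ (a,j) = (if g a = j then 1 else 0)" unfolding P_def by simp
  have "permutation_mat n P"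
    unfolding permutation_mat_def
  proof (intro conjI allI impI)
    show "P \<in> carrier_mat n n" by (rule Pc)
  next
    fix a j assume "a < n" "j < n"
    then show "P $$ (a, j) = 0 \<or> P $$ (a, j) = 1" using Pe by simp
  next
    fix a assume a: "a < n"
    show "\<exists>!j. j < n \<and> P $$ (a, j) = 1"
    proof (rule ex1I[of _ "g a"])
      show "g a < n \<and> P $$ (a, g a) = 1" using Pe a rng by auto
      fix j assume "j < n \<and> P $$ (a, j) = 1"
      then show "j = g a" using Pe a by (cases "g a = j") auto
    qed
  next
    fix j assume j: "j < n"
    then obtain a where a: "a < n" "g a = j" using surj by (metis imageE lessThan_iff)
    show "\<exists>!i. i < n \<and> P $$ (i, j) = 1"
    proof (rule ex1I[of _ a])
      show "a < n \<and> P $$ (a, j) = 1" using a Pe j by auto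
      fix b assume "b < n \<and> P $$ (b, j) = 1"
      then have b: "b < n" and Pb: "P $$ (b, j) = 1" by auto
      have "g b = j"
      proof (rule ccontr)
        assume "g b \<noteq> j"
        then have "P $$ (b, j) = 0" using Pe b j by simp
        with Pb show False by simp
      qed
      note b this
      then show "b = a" using a inj unfolding inj_on_def by auto
    qed
  qed
  moreover have "eigenvector (laplacian n w) (P *\<^sub>v ones_prefix n i) (real n - real i)"
    if i: "i \<in> {1..n}" for i
  proof -
    have "eigenvector (laplacian n w) (ind n (\<lambda>a. g a < i)) (real n - real i)"
    proof (rule evB)
      show "card {b. b < n \<and> g b < i} = i" using card_lev[OF inj rng] i by auto
      show "1 \<le> i" using i by auto
      fix a b assume "a < n" "b < n" "g a < i" "\<not> g b < i"
      then show "w a b = 1 \<and> w b a = 0" using W by auto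
    qed (rule lap_ind)
    then show ?thesis using Pv[OF Pc Pe rng] by simp
  qed
  ultimately show ?thesis by blast
qed

lemma perm_Rg:
  assumes weights: "\<And>i j. i < n \<Longrightarrow> j < n \<Longrightarrow> 0 \<le> w i j \<and> w i j \<le> 1"
    and no_loops: "\<And>i. i < n \<Longrightarrow> w i i = 0"
    and P: "permutation_mat n P"
    and ev: "\<forall>i\<in>{1..n}. eigenvector (laplacian n w) (P *\<^sub>v ones_prefix n i) (real n - real i)"
  shows "\<exists>g. Rg n w g"
proof -
  note PD = P[unfolded permutation_mat_def]
  note Pc = PD[THEN conjunct1]
  note P01 = PD[THEN conjunct2, THEN conjunct1]
  note Prow = PD[THEN conjunct2, THEN conjunct2, THEN conjunct1]
  note Pcol = PD[THEN conjunct2, THEN conjunct2, THEN conjunct2]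
  define g where "g a = (THE j. j < n \<and> P $$ (a,j) = 1)" for a
  have g1: "g a < n \<and> P $$ (a, g a) = 1" if "a < n" for a
    unfolding g_def by (rule theI'[OF Prow[rule_format, OF that]])
  have g2: "j = g a" if "a < n" "j < n" "P $$ (a,j) = 1" for a j
    unfolding g_def using that by (intro the1_equality[symmetric] Prow[rule_format]) simp_all
  have rng: "\<forall>a<n. g a < n" using g1 by blast
  have Pe: "\<forall>a<n. \<forall>j<n. P $$ (a,j) = (if g a = j then 1 else 0)"
  proof (intro allI impI)
    fix a j assume a: "a < n" and j: "j < n"
    show "P $$ (a,j) = (if g a = j then 1 else 0)"
    proof (cases "g a = j")
      case True then show ?thesis using g1[OF a] by simp
    next
      case False
      then have "P $$ (a,j) \<noteq> 1" using g2[OF a j] by metis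
      then show ?thesis using P01 a j False by auto
    qed
  qed
  have inj: "inj_on g {..<n}"
  proof (rule inj_onI)
    fix a b assume "a \<in> {..<n}" "b \<in> {..<n}" "g a = g b"
    then have a: "a < n" and b: "b < n" and gab: "g a = g b" by auto
    have u: "\<exists>!i. i < n \<and> P $$ (i, g a) = 1" using Pcol g1[OF a] by simp
    have "(THE i. i < n \<and> P $$ (i, g a) = 1) = a" using u g1[OF a] a by (intro the1_equality) simp_all
    moreover have "(THE i. i < n \<and> P $$ (i, g a) = 1) = b" using u g1[OF b] b gab by (intro the1_equality) simp_all
    ultimately show "a = b" by simp
  qed
  have key: "w a b = 1 \<and> w b a = 0" if ab: "a < n" "b < n" "g a < g b" for a b
  proof -
    define i where "i = Suc (g a)"
    have i: "i \<in> {1..n}" using ab rng unfolding i_def by auto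
    have e: "eigenvector (laplacian n w) (ind n (\<lambda>x. g x < i)) (real n - real i)"
      using ev i Pv[OF Pc Pe rng] by auto
    show ?thesis
    proof (rule evA[OF weights _ e])
      show "card {b. b < n \<and> g b < i} = i" using card_lev[OF inj rng] i by auto
      show "\<And>x. x < n \<Longrightarrow> (laplacian n w *\<^sub>v ind n (\<lambda>x. g x < i)) $ x =
        (if g x < i then (\<Sum>b\<in>{b. b<n \<and> \<not> g b < i}. w x b) else - (\<Sum>b\<in>{b. b<n \<and> g b < i}. w x b))"
        by (rule lap_ind)
      show "a < n" "b < n" by (fact ab)+
      show "g a < i" "\<not> g b < i" using ab(3) unfolding i_def by simp_all
    qed
  qed
  have "w a b = (if g a < g b then 1 else 0)" if "a < n" "b < n" for a b
  proof (cases "g a < g b")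
    case True then show ?thesis using key that by auto
  next
    case False
    show ?thesis
    proof (cases "a = b")
      case True then show ?thesis using no_loops that by simp
    next
      case ne: False
      then have "g a \<noteq> g b" using inj that unfolding inj_on_def by blast
      then have "g b < g a" using False by simp
      then show ?thesis using key[of b a] that False by simp
    qed
  qed
  then show ?thesis using inj rng unfolding Rg_def by blast
qed

theorem theorem3p2:
  fixes n :: nat and w :: "nat \<Rightarrow> nat \<Rightarrow> real"
  assumes weights: "\<And>i j. i < n \<Longrightarrow> j < n \<Longrightarrow> 0 \<le> w i j \<and> w i j \<le> 1"
    and no_loops: "\<And>i. i < n \<Longrightarrow> w i i = 0"
  shows "complete_dominance_graph n w \<longleftrightarrow>
    (\<exists>P. permutation_mat n P \<and>
       (\<forall>i\<in>{1..n}. eigenvector (laplacian n w) (P *\<^sub>v ones_prefix n i) (real n - real i)))"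
proof
  assume "complete_dominance_graph n w"
  then obtain g where "Rg n w g" using cdg_Rg no_loops by blast
  then show "\<exists>P. permutation_mat n P \<and>
       (\<forall>i\<in>{1..n}. eigenvector (laplacian n w) (P *\<^sub>v ones_prefix n i) (real n - real i))"
    by (rule Rg_perm)
next
  assume "\<exists>P. permutation_mat n P \<and>
       (\<forall>i\<in>{1..n}. eigenvector (laplacian n w) (P *\<^sub>v ones_prefix n i) (real n - real i))"
  then obtain P where PP: "permutation_mat n P"
    and EV: "\<forall>i\<in>{1..n}. eigenvector (laplacian n w) (P *\<^sub>v ones_prefix n i) (real n - real i)" by blast
  obtain g where "Rg n w g" using perm_Rg[of n w P, OF weights no_loops PP EV] by blast
  then show "complete_dominance_graph n w" by (rule Rg_cdg)
qed

end
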